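(* For all nonnegative integers $a_1,a_2,s$, \[ G(a_1,a_2,s)=\sum_{b_1,b_2\ge0}(-1)^{b_1+b_2}\binom{a_1+a_2-b_1-b_2}{s}\binom{a_1+a_2-b_1-b_2}{a_1-b_1}, \] where $\binom{N}{K}=0$ unless $0\le K\le N$.
   Context: For integers $a_1,a_2,s$ with $a=a_1+a_2$, $G(a_1,a_2,s)=\sum_m N_m$, the sum over integers $m$ such that $a_1-m,\ a_2-(s-m),\ m,\ s-m$ are all nonnegative (an empty sum is $0$), where $N_m$ is the number of permutations $\pi$ of $[a]$ that are decreasing within each of four consecutive blocks of positions of lengths $a_1-m,\ a_2-(s-m),\ m,\ s-m$ (in this order; arbitrary between blocks), and have no fixed point ($\pi_i=i$) in the first two blocks. *)

theory Defs
  imports "HOL-Combinatorics.Permutations"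
begin

definition dec_on :: "(nat \<Rightarrow> nat) \<Rightarrow> nat \<Rightarrow> nat \<Rightarrow> bool" where
  "dec_on p lo hi \<longleftrightarrow> (\<forall>i j. lo \<le> i \<and> i < j \<and> j \<le> hi \<longrightarrow> p j < p i)"

definition Ncount :: "nat \<Rightarrow> nat \<Rightarrow> nat \<Rightarrow> nat \<Rightarrow> nat" where
  "Ncount l1 l2 l3 l4 = card {p. p permutes {1..l1+l2+l3+l4}
      \<and> dec_on p 1 l1
      \<and> dec_on p (l1+1) (l1+l2)
      \<and> dec_on p (l1+l2+1) (l1+l2+l3)
      \<and> dec_on p (l1+l2+l3+1) (l1+l2+l3+l4)
      \<and> (\<forall>i\<in>{1..l1+l2}. p i \<noteq> i)}"

definition G :: "int \<Rightarrow> int \<Rightarrow> int \<Rightarrow> nat" where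
  "G a1 a2 s = (\<Sum>m\<in>{m::int. a1 - m \<ge> 0 \<and> a2 - (s - m) \<ge> 0 \<and> m \<ge> 0 \<and> s - m \<ge> 0}.
      Ncount (nat (a1 - m)) (nat (a2 - (s - m))) (nat m) (nat (s - m)))"

definition binom :: "int \<Rightarrow> int \<Rightarrow> int" where
  "binom N K = (if 0 \<le> K \<and> K \<le> N then int (nat N choose nat K) else 0)"

end

theory Submission
  imports Defs
begin


definition shr :: "nat \<Rightarrow> nat \<Rightarrow> nat" where "shr i x = (if x < i then x else x - 1)"
definition grw :: "nat \<Rightarrow> nat \<Rightarrow> nat" where "grw i x = (if x < i then x else x + 1)"
definition rem :: "nat \<Rightarrow> nat \<Rightarrow> (nat \<Rightarrow> nat) \<Rightarrow> nat \<Rightarrow> nat" where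
  "rem j v p = (\<lambda>x. shr v (p (grw j x)))"
definition ins :: "nat \<Rightarrow> nat \<Rightarrow> (nat \<Rightarrow> nat) \<Rightarrow> nat \<Rightarrow> nat" where
  "ins j v q = (\<lambda>x. if x = j then v else grw v (q (shr j x)))"

lemma shr_grw[simp]: "shr i (grw i x) = x" by (simp add: shr_def grw_def)
lemma grw_shr[simp]: "x \<noteq> i \<Longrightarrow> grw i (shr i x) = x" by (auto simp: shr_def grw_def)
lemma grw_neq[simp]: "grw i x \<noteq> i" by (simp add: grw_def)
lemma shr_less_iff: "x \<noteq> v \<Longrightarrow> y \<noteq> v \<Longrightarrow> shr v x < shr v y \<longleftrightarrow> x < y"
  by (auto simp: shr_def)
lemma shr_eq_iff: "x \<noteq> v \<Longrightarrow> y \<noteq> v \<Longrightarrow> shr v x = shr v y \<longleftrightarrow> x = y"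
  by (auto simp: shr_def)
lemma grw_less_iff[simp]: "grw i x < grw i y \<longleftrightarrow> x < y" by (auto simp: grw_def)
lemma grw_eq_iff[simp]: "grw i x = grw i y \<longleftrightarrow> x = y" by (auto simp: grw_def)

lemma perm_from_inj:
  assumes "finite S" "inj_on f S" "f ` S \<subseteq> S" "\<And>x. x \<notin> S \<Longrightarrow> f x = x"
  shows "f permutes S"
  using assms endo_inj_surj[of S f] by (intro bij_imp_permutes) (auto simp: bij_betw_def)

lemma rem_perm:
  assumes p: "p permutes {1..n}" and "p j = v" "1 \<le> j" "j \<le> n" "1 \<le> v" "v \<le> n"
  shows "rem j v p permutes {1..n-1}"
proof (rule perm_from_inj)
  have ip: "inj p" using p by (rule permutes_inj)
  have nv: "p (grw j x) \<noteq> v" for x using ip assms(2) grw_neq[of j x] by (metis injD)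
  show "inj_on (rem j v p) {1..n - 1}"
    unfolding inj_on_def rem_def using nv ip shr_eq_iff by (metis grw_eq_iff injD)
  show "rem j v p ` {1..n - 1} \<subseteq> {1..n - 1}"
  proof
    fix y assume "y \<in> rem j v p ` {1..n - 1}"
    then obtain x where x: "x \<in> {1..n-1}" "y = shr v (p (grw j x))" by (auto simp: rem_def)
    have "grw j x \<in> {1..n}" using x assms by (auto simp: grw_def)
    then have "p (grw j x) \<in> {1..n}" using permutes_in_image[OF p] by blast
    then show "y \<in> {1..n-1}" using x nv[of x] assms by (auto simp: shr_def)
  qed
  fix x assume x: "x \<notin> {1..n-1}"
  show "rem j v p x = x"
  proof (cases "x = 0")
    case True
    then have "grw j x = 0" using assms by (simp add: grw_def)
    moreover have "p 0 = 0" using permutes_not_in[OF p] by simp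
    ultimately show ?thesis using True by (simp add: rem_def shr_def)
  next
    case False
    then have "x \<ge> n" using x by auto
    then have "grw j x = x + 1" using assms by (simp add: grw_def)
    moreover have "p (x+1) = x+1" using permutes_not_in[OF p] \<open>x \<ge> n\<close> by simp
    ultimately show ?thesis using \<open>x \<ge> n\<close> assms by (simp add: rem_def shr_def)
  qed
qed simp

lemma ins_perm:
  assumes q: "q permutes {1..n-1}" and "1 \<le> j" "j \<le> n" "1 \<le> v" "v \<le> n"
  shows "ins j v q permutes {1..n}"
proof (rule perm_from_inj)
  have iq: "inj q" using q by (rule permutes_inj)
  show "inj_on (ins j v q) {1..n}"
    unfolding inj_on_def ins_def using iq shr_eq_iff
    by (smt (verit, ccfv_threshold) grw_eq_iff grw_neq injD)
  show "ins j v q ` {1..n} \<subseteq> {1..n}"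
  proof
    fix y assume "y \<in> ins j v q ` {1..n}"
    then obtain x where x: "x \<in> {1..n}" "y = ins j v q x" by auto
    show "y \<in> {1..n}"
    proof (cases "x = j")
      case True then show ?thesis using x assms by (simp add: ins_def)
    next
      case False
      then have "shr j x \<in> {1..n-1}" using x assms by (auto simp: shr_def)
      then have "q (shr j x) \<in> {1..n-1}" using permutes_in_image[OF q] by blast
      then show ?thesis using x False assms by (auto simp: ins_def grw_def)
    qed
  qed
  fix x assume x: "x \<notin> {1..n}"
  show "ins j v q x = x"
  proof (cases "x = 0")
    case True
    then show ?thesis using assms permutes_not_in[OF q, of 0] by (simp add: ins_def shr_def grw_def)
  next
    case False
    then have "x > n" using x by auto
    then have "x - 1 \<notin> {1..n-1}" using assms by auto
    then have "q (x - 1) = x - 1" using permutes_not_in[OF q] by blast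
    then show ?thesis using \<open>x > n\<close> assms by (simp add: ins_def shr_def grw_def)
  qed
qed simp

lemma rem_ins[simp]: "rem j v (ins j v q) = q"
  by (rule ext) (simp add: rem_def ins_def)

lemma ins_rem:
  assumes "inj p" "p j = v" shows "ins j v (rem j v p) = p"
proof (rule ext)
  fix x show "ins j v (rem j v p) x = p x"
  proof (cases "x = j")
    case False
    then have "p x \<noteq> v" using assms by (metis injD)
    then show ?thesis using False by (simp add: ins_def rem_def)
  qed (simp add: ins_def assms)
qed

lemma rem_less_iff:
  assumes "inj p" "p j = v"
  shows "rem j v p y < rem j v p z \<longleftrightarrow> p (grw j y) < p (grw j z)"
proof -
  have "p (grw j x) \<noteq> v" for x using assms grw_neq[of j x] by (metis injD)
  then show ?thesis by (simp add: rem_def shr_less_iff)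
qed

lemma rem_fix_iff:
  assumes "inj p" "p i = i"
  shows "rem i i p y = y \<longleftrightarrow> p (grw i y) = grw i y"
proof -
  have "p (grw i y) \<noteq> i" using assms grw_neq[of i y] by (metis injD)
  then show ?thesis unfolding rem_def
    by (metis grw_neq grw_shr shr_grw)
qed



lemma dec_before:
  assumes "inj p" "p j = v" "hi < j"
  shows "dec_on p lo hi \<longleftrightarrow> dec_on (rem j v p) lo hi"
proof -
  have g: "x \<le> hi \<Longrightarrow> grw j x = x" for x using assms by (simp add: grw_def)
  have r: "a \<le> hi \<Longrightarrow> b \<le> hi \<Longrightarrow> rem j v p b < rem j v p a \<longleftrightarrow> p b < p a" for a b
    using rem_less_iff[OF assms(1,2)] g by simp
  show ?thesis unfolding dec_on_def
    using r by (meson less_imp_le order.trans)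
qed

lemma dec_after:
  assumes "inj p" "p j = v" "j < lo"
  shows "dec_on p lo hi \<longleftrightarrow> dec_on (rem j v p) (lo - 1) (hi - 1)"
proof -
  have g: "lo - 1 \<le> x \<Longrightarrow> grw j x = x + 1" for x using assms by (simp add: grw_def)
  have r: "lo - 1 \<le> a \<Longrightarrow> lo - 1 \<le> b \<Longrightarrow> rem j v p b < rem j v p a \<longleftrightarrow> p (b+1) < p (a+1)" for a b
    using rem_less_iff[OF assms(1,2)] g by simp
  show ?thesis
  proof
    assume d: "dec_on p lo hi"
    show "dec_on (rem j v p) (lo - 1) (hi - 1)" unfolding dec_on_def
    proof (intro allI impI)
      fix a b assume ab: "lo - 1 \<le> a \<and> a < b \<and> b \<le> hi - 1"
      then have "lo \<le> a+1" "a+1 < b+1" "b+1 \<le> hi" by linarith+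
      then have "p (b+1) < p (a+1)" using d unfolding dec_on_def by blast
      then show "rem j v p b < rem j v p a" using r ab by auto
    qed
  next
    assume d: "dec_on (rem j v p) (lo - 1) (hi - 1)"
    show "dec_on p lo hi" unfolding dec_on_def
    proof (intro allI impI)
      fix a b assume ab: "lo \<le> a \<and> a < b \<and> b \<le> hi"
      then have "lo - 1 \<le> a - 1" "a - 1 < b - 1" "b - 1 \<le> hi - 1" using assms by linarith+
      then have "rem j v p (b-1) < rem j v p (a-1)" using d unfolding dec_on_def by blast
      then have "p (b-1+1) < p (a-1+1)" using r[of "a-1" "b-1"] ab assms by linarith
      then show "p b < p a" using ab assms by simp
    qed
  qed
qed

lemma dec_in:
  assumes "inj p" "p j = v" "lo \<le> j" "j \<le> hi" "dec_on p lo hi"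
  shows "dec_on (rem j v p) lo (hi - 1)"
  unfolding dec_on_def
proof (intro allI impI)
  fix a b assume ab: "lo \<le> a \<and> a < b \<and> b \<le> hi - 1"
  have "lo \<le> grw j a" "grw j a < grw j b" "grw j b \<le> hi" using ab assms by (auto simp: grw_def)
  then have "p (grw j b) < p (grw j a)" using assms(5) unfolding dec_on_def by blast
  then show "rem j v p b < rem j v p a" using rem_less_iff[OF assms(1,2)] by blast
qed

lemma dec_ins_in:
  assumes "dec_on q lo (hi - 1)" "lo \<le> j" "j \<le> hi"
    and A: "\<And>x. lo \<le> x \<Longrightarrow> x < j \<Longrightarrow> v \<le> q x"
    and B: "\<And>x. j \<le> x \<Longrightarrow> x < hi \<Longrightarrow> q x < v"
  shows "dec_on (ins j v q) lo hi"
  unfolding dec_on_def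
proof (intro allI impI)
  fix a b assume ab: "lo \<le> a \<and> a < b \<and> b \<le> hi"
  have D: "\<And>x y. lo \<le> x \<Longrightarrow> x < y \<Longrightarrow> y \<le> hi - 1 \<Longrightarrow> q y < q x"
    using assms(1) unfolding dec_on_def by blast
  consider "a < j" "b < j" | "a < j" "b = j" | "a < j" "b > j" | "a = j" | "a > j" using ab by linarith
  then show "ins j v q b < ins j v q a"
  proof cases
    case 1 then have "b \<le> hi - 1" using assms(3) by linarith
    then show ?thesis using 1 ab A[of a] A[of b] D[of a b] by (auto simp: ins_def shr_def grw_def)
  next
    case 2 then show ?thesis using ab A[of a] by (auto simp: ins_def shr_def grw_def)
  next
    case 3 then have "q (b - 1) < v" using ab B[of "b - 1"] by linarith
    then show ?thesis using 3 ab A[of a] by (auto simp: ins_def shr_def grw_def)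
  next
    case 4 then have "q (b - 1) < v" using ab B[of "b - 1"] by linarith
    then show ?thesis using 4 ab by (auto simp: ins_def shr_def grw_def)
  next
    case 5 then have "q (b - 1) < v" "q (a - 1) < v"
      using ab B[of "b - 1"] B[of "a - 1"] by linarith+
    have "lo \<le> a - 1" "a - 1 < b - 1" "b - 1 \<le> hi - 1" using 5 ab assms(2) by linarith+
    then have "q (b - 1) < q (a - 1)" using D by blast
    then show ?thesis using 5 ab
      by (auto simp: ins_def shr_def grw_def)
  qed
qed



lemma grw_ge: "x \<le> grw i x" by (simp add: grw_def)
lemma grw_le: "grw i x \<le> x + 1" by (simp add: grw_def)

lemma card_inverse:
  assumes "finite A" "finite B" "f ` A \<subseteq> B" "g ` B \<subseteq> A"
    "\<And>x. x \<in> A \<Longrightarrow> g (f x) = x" "\<And>y. y \<in> B \<Longrightarrow> f (g y) = y"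
  shows "card A = card B"
  using assms by (intro bij_betw_same_card[of f]) (rule bij_betw_byWitness[of _ g]; auto)

lemma uniq_fp:
  assumes "dec_on p lo hi" "p i = i" "p k = k" "lo \<le> i" "i \<le> hi" "lo \<le> k" "k \<le> hi"
  shows "i = k"
  using assms unfolding dec_on_def by (metis linorder_neqE_nat not_less_iff_gr_or_eq)

definition cond :: "nat \<Rightarrow> nat \<Rightarrow> (nat \<Rightarrow> nat) \<Rightarrow> nat \<Rightarrow> bool" where
  "cond lo hi q i \<longleftrightarrow> lo \<le> i \<and> i \<le> hi \<and> (\<forall>x. lo \<le> x \<and> x < i \<longrightarrow> i \<le> q x)
     \<and> (\<forall>x. i \<le> x \<and> x < hi \<longrightarrow> q x < i)"

lemma cond_uniq: "cond lo hi q i \<Longrightarrow> cond lo hi q k \<Longrightarrow> i = k"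
  unfolding cond_def by (metis le_refl linorder_neqE_nat not_le order.strict_trans order_trans)

lemma cond_exists:
  assumes "dec_on q lo (hi - 1)" "\<forall>x\<in>{lo..hi-1}. q x \<noteq> x" "lo \<le> hi"
  shows "\<exists>i. cond lo hi q i"
proof -
  define P where "P i \<longleftrightarrow> lo \<le> i \<and> (i = hi \<or> q i < i)" for i
  have Ph: "P hi" using assms by (simp add: P_def)
  define i0 where "i0 = (LEAST i. P i)"
  have P0: "P i0" unfolding i0_def using Ph by (rule LeastI)
  have le: "i0 \<le> hi" unfolding i0_def using Ph by (rule Least_le)
  have nP: "\<not> P x" if "x < i0" for x using that unfolding i0_def by (rule not_less_Least)
  have lo0: "lo \<le> i0" using P0 by (simp add: P_def)
  have D: "\<And>x y. lo \<le> x \<Longrightarrow> x < y \<Longrightarrow> y \<le> hi - 1 \<Longrightarrow> q y < q x"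
    using assms(1) unfolding dec_on_def by blast
  have A: "i0 \<le> q x" if "lo \<le> x" "x < i0" for x
  proof -
    have h1: "\<not> P (i0 - 1)" using nP[of "i0 - 1"] that by linarith
    have "lo \<le> i0 - 1" "i0 - 1 \<le> hi - 1" using that le by linarith+
    then have "q (i0 - 1) \<noteq> i0 - 1" using assms(2) by auto
    moreover have "i0 - 1 \<noteq> hi" using that le by linarith
    ultimately have "q (i0 - 1) \<ge> i0" using h1 \<open>lo \<le> i0 - 1\<close> unfolding P_def by linarith
    moreover have "q x \<ge> q (i0 - 1)"
    proof (cases "x = i0 - 1")
      case False then have "x < i0 - 1" using that by linarith
      then show ?thesis using D[of x "i0 - 1"] that \<open>i0 - 1 \<le> hi - 1\<close> by linarith
    qed simp
    ultimately show ?thesis by linarith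
  qed
  have B: "q x < i0" if "i0 \<le> x" "x < hi" for x
  proof -
    have "q i0 < i0" using P0 that unfolding P_def by linarith
    show ?thesis
    proof (cases "x = i0")
      case False
      then have "lo \<le> i0" "i0 < x" "x \<le> hi - 1" using that lo0 by linarith+
      then show ?thesis using D[of i0 x] \<open>q i0 < i0\<close> by linarith
    qed (use \<open>q i0 < i0\<close> in simp)
  qed
  show ?thesis using A B le lo0 unfolding cond_def by blast
qed

lemma card_fp_remove:
  assumes lo: "1 \<le> lo" "lo \<le> hi" "hi \<le> n"
    and DD': "\<And>p i. p permutes {1..n} \<Longrightarrow> lo \<le> i \<Longrightarrow> i \<le> hi \<Longrightarrow> p i = i \<Longrightarrow> dec_on p lo hi
      \<Longrightarrow> D p \<longleftrightarrow> D' (rem i i p)"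
  shows "card {p. p permutes {1..n} \<and> dec_on p lo hi \<and> (\<exists>i\<in>{lo..hi}. p i = i) \<and> D p}
       = card {q. q permutes {1..n-1} \<and> dec_on q lo (hi-1) \<and> (\<forall>i\<in>{lo..hi-1}. q i \<noteq> i) \<and> D' q}"
    (is "card ?A = card ?B")
proof -
  define fp where "fp p = (THE i. i \<in> {lo..hi} \<and> p i = i)" for p :: "nat \<Rightarrow> nat"
  define pos where "pos q = (THE i. cond lo hi q i)" for q
  have fp: "fp p = i" if "dec_on p lo hi" "i \<in> {lo..hi}" "p i = i" for p i
    unfolding fp_def
  proof (rule the_equality)
    show "i \<in> {lo..hi} \<and> p i = i" using that by simp
    fix k assume "k \<in> {lo..hi} \<and> p k = k"
    then show "k = i" using uniq_fp[OF that(1) _ that(3)] that(2) by auto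
  qed
  have pos: "pos q = i" if "cond lo hi q i" for q i
    unfolding pos_def by (rule the_equality[where P="cond lo hi q", OF that]) (rule cond_uniq[OF _ that])
  show ?thesis
  proof (rule card_inverse[where f = "\<lambda>p. rem (fp p) (fp p) p" and g = "\<lambda>q. ins (pos q) (pos q) q"])
    show "finite ?A" by (rule finite_subset[OF _ finite_permutations[of "{1..n}"]]) auto
    show "finite ?B" by (rule finite_subset[OF _ finite_permutations[of "{1..n-1}"]]) auto
    show "(\<lambda>p. rem (fp p) (fp p) p) ` ?A \<subseteq> ?B"
    proof (rule image_subsetI)
      fix p assume "p \<in> ?A"
      then obtain i where p: "p permutes {1..n}" "dec_on p lo hi" "i \<in> {lo..hi}" "p i = i" "D p" by blast
      have e: "fp p = i" using fp[OF p(2) p(3) p(4)] .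
      have ip: "inj p" using p(1) by (rule permutes_inj)
      have ii: "lo \<le> i" "i \<le> hi" using p(3) by auto
      have "1 \<le> i" "i \<le> n" using ii lo by linarith+
      then have P1: "rem i i p permutes {1..n - 1}"
        by (intro rem_perm[OF p(1) p(4)])
      have P2: "dec_on (rem i i p) lo (hi - 1)"
        using dec_in[OF ip p(4) ii p(2)] .
      have P3: "D' (rem i i p)" using DD'[OF p(1) ii p(4) p(2)] p(5) by blast
      have P4: False if y: "y \<in> {lo..hi-1}" "rem (fp p) (fp p) p y = y" for y
      proof -
      from y have "p (grw i y) = grw i y" using rem_fix_iff[OF ip p(4)] e by simp
      moreover have "lo \<le> grw i y" "grw i y \<le> hi"
      proof -
        have "lo \<le> y" "y \<le> hi - 1" using y(1) by auto
        then show "lo \<le> grw i y" "grw i y \<le> hi" using grw_ge[of y i] grw_le[of i y] lo(1,2) by linarith+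
      qed
      ultimately have "grw i y = i" using uniq_fp[OF p(2) _ p(4) _ _ ii] by blast
      then show False by simp
      qed
      show "rem (fp p) (fp p) p \<in> ?B" using P1 P2 P3 P4 unfolding e by blast
    qed
    show "(\<lambda>q. ins (pos q) (pos q) q) ` ?B \<subseteq> ?A"
    proof (rule image_subsetI)
      fix q assume "q \<in> ?B"
      then have q: "q permutes {1..n-1}" "dec_on q lo (hi - 1)" "\<forall>i\<in>{lo..hi-1}. q i \<noteq> i" "D' q"
        by blast+
      obtain i where c: "cond lo hi q i" using cond_exists[OF q(2,3) lo(2)] by blast
      have e: "pos q = i" using pos[OF c] .
      have ii: "lo \<le> i" "i \<le> hi" using c unfolding cond_def by blast+
      have pp: "ins i i q permutes {1..n}" using ins_perm[OF q(1), of i i] ii lo by simp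
      have cA: "\<And>x. lo \<le> x \<Longrightarrow> x < i \<Longrightarrow> i \<le> q x" and cB: "\<And>x. i \<le> x \<Longrightarrow> x < hi \<Longrightarrow> q x < i"
        using c unfolding cond_def by blast+
      have dd: "dec_on (ins i i q) lo hi"
        by (rule dec_ins_in[OF q(2) ii]) (fact cA, fact cB)
      have fx: "ins i i q i = i" by (simp add: ins_def)
      have DD: "D (ins i i q)" using DD'[OF pp ii fx dd] q(4) by simp
      have "\<exists>x\<in>{lo..hi}. ins i i q x = x" using fx ii by auto
      then have "ins i i q \<in> ?A" using pp dd DD by (intro CollectI conjI)
      then show "ins (pos q) (pos q) q \<in> ?A" unfolding e .
    qed
    fix p assume "p \<in> ?A"
    then have p: "p permutes {1..n}" "dec_on p lo hi" "D p" and "\<exists>i\<in>{lo..hi}. p i = i" by blast+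
    then obtain i where i: "i \<in> {lo..hi}" "p i = i" by blast
    have e: "fp p = i" using fp[OF p(2) i(1) i(2)] .
    have ip: "inj p" using p(1) by (rule permutes_inj)
    have c: "cond lo hi (rem i i p) i" unfolding cond_def
    proof (intro conjI allI impI)
      fix x assume x: "lo \<le> x \<and> x < i"
      have "lo \<le> x" "x < i" "i \<le> hi" using x i(1) by auto
      then have "p i < p x" using p(2) unfolding dec_on_def by blast
      then have "i < p x" using i(2) by simp
      then show "i \<le> rem i i p x" using \<open>x < i\<close> by (simp add: rem_def shr_def grw_def)
    next
      fix x assume x: "i \<le> x \<and> x < hi"
      have "lo \<le> i" "i < x+1" "x+1 \<le> hi" using x i(1) by auto
      then have "p (x+1) < p i" using p(2) unfolding dec_on_def by blast
      then have "p (x+1) < i" using i(2) by simp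
      then show "rem i i p x < i" using x by (simp add: rem_def shr_def grw_def)
    qed (use i(1) in auto)
    show "ins (pos (rem (fp p) (fp p) p)) (pos (rem (fp p) (fp p) p)) (rem (fp p) (fp p) p) = p"
      unfolding e pos[OF c] using ins_rem[OF ip i(2)] .
  next
    fix q assume "q \<in> ?B"
    then have q: "q permutes {1..n-1}" "dec_on q lo (hi - 1)" "\<forall>i\<in>{lo..hi-1}. q i \<noteq> i" by blast+
    obtain i where c: "cond lo hi q i" using cond_exists[OF q(2,3) lo(2)] by blast
    have e: "pos q = i" using pos[OF c] .
    have ii: "lo \<le> i" "i \<le> hi" using c unfolding cond_def by blast+
    have cA: "\<And>x. lo \<le> x \<Longrightarrow> x < i \<Longrightarrow> i \<le> q x" and cB: "\<And>x. i \<le> x \<Longrightarrow> x < hi \<Longrightarrow> q x < i"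
      using c unfolding cond_def by blast+
    have dd: "dec_on (ins i i q) lo hi"
      using dec_ins_in[OF q(2) ii, of i] cA cB by blast
    have fx: "ins i i q i = i" by (simp add: ins_def)
    have "fp (ins i i q) = i" using fp[OF dd _ fx] ii by simp
    then show "rem (fp (ins (pos q) (pos q) q)) (fp (ins (pos q) (pos q) q)) (ins (pos q) (pos q) q) = q"
      using e by simp
  qed
qed


lemma card_top_remove:
  assumes lo: "1 \<le> lo" "lo \<le> hi" "hi \<le> n"
    and DD': "\<And>p. p permutes {1..n} \<Longrightarrow> p lo = n \<Longrightarrow> dec_on p lo hi
      \<Longrightarrow> D p \<longleftrightarrow> D' (rem lo n p)"
  shows "card {p. p permutes {1..n} \<and> dec_on p lo hi \<and> p lo = n \<and> D p}
       = card {q. q permutes {1..n-1} \<and> dec_on q lo (hi-1) \<and> D' q}"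
    (is "card ?A = card ?B")
proof (rule card_inverse[where f = "rem lo n" and g = "ins lo n"])
  show "finite ?A" by (rule finite_subset[OF _ finite_permutations[of "{1..n}"]]) auto
  show "finite ?B" by (rule finite_subset[OF _ finite_permutations[of "{1..n-1}"]]) auto
  show "rem lo n ` ?A \<subseteq> ?B"
  proof (rule image_subsetI, rule CollectI, goal_cases)
    case (1 p)
    then have p: "p permutes {1..n}" "dec_on p lo hi" "p lo = n" "D p" by auto
    have ip: "inj p" using p(1) by (rule permutes_inj)
    have "rem lo n p permutes {1..n - 1}" using rem_perm[OF p(1) p(3)] lo by auto
    moreover have "dec_on (rem lo n p) lo (hi - 1)" using dec_in[OF ip p(3) _ _ p(2)] lo by auto
    moreover have "D' (rem lo n p)" using DD'[OF p(1) p(3) p(2)] p(4) by auto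
    ultimately show ?case by blast
  qed
  show "ins lo n ` ?B \<subseteq> ?A"
  proof safe
    fix q assume q: "q permutes {1..n-1}" "dec_on q lo (hi - 1)" "D' q"
    have pp: "ins lo n q permutes {1..n}" using ins_perm[OF q(1)] lo by auto
    have B: "q x < n" if "lo \<le> x" "x < hi" for x
    proof -
      have "x \<in> {1..n-1}" using that lo by auto
      then have "q x \<in> {1..n-1}" using permutes_in_image[OF q(1)] by blast
      then show ?thesis by auto
    qed
    have dd: "dec_on (ins lo n q) lo hi"
      using dec_ins_in[OF q(2) order.refl lo(2), of n] B by auto
    have fx: "ins lo n q lo = n" by (simp add: ins_def)
    show "ins lo n q permutes {1..n}" by (rule pp)
    show "dec_on (ins lo n q) lo hi" by (rule dd)
    show "ins lo n q lo = n" by (rule fx)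
    show "D (ins lo n q)" using DD'[OF pp fx dd] q(3) by simp
  qed
  fix p assume "p \<in> ?A"
  then show "ins lo n (rem lo n p) = p" using ins_rem permutes_inj by blast
qed simp



lemma dec_after': 
  assumes "inj p" "p j = v" "j \<le> lo"
  shows "dec_on (rem j v p) lo hi \<longleftrightarrow> dec_on p (lo + 1) (hi + 1)"
  using dec_after[OF assms(1,2), of "lo+1" "hi+1"] assms(3) by simp

lemma fp_after:
  assumes "inj p" "p i = i" "i \<le> lo"
  shows "(\<exists>y\<in>{lo..hi}. rem i i p y = y) \<longleftrightarrow> (\<exists>x\<in>{lo+1..hi+1}. p x = x)"
proof -
  have g: "y \<in> {lo..hi} \<Longrightarrow> grw i y = y + 1" for y using assms(3) by (simp add: grw_def)
  have "(\<exists>y\<in>{lo..hi}. rem i i p y = y) \<longleftrightarrow> (\<exists>y\<in>{lo..hi}. p (y+1) = y+1)"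
    using rem_fix_iff[OF assms(1,2)] g by auto
  also have "\<dots> \<longleftrightarrow> (\<exists>x\<in>{lo+1..hi+1}. p x = x)"
  proof
    assume "\<exists>x\<in>{lo + 1..hi + 1}. p x = x"
    then obtain x where "x \<in> {lo + 1..hi + 1}" "p x = x" by blast
    then show "\<exists>y\<in>{lo..hi}. p (y+1) = y+1" by (intro bexI[of _ "x - 1"]) auto
  qed auto
  finally show ?thesis .
qed

lemma fp_before:
  assumes "inj p" "p i = i" "hi < i"
  shows "(\<exists>y\<in>{lo..hi}. rem i i p y = y) \<longleftrightarrow> (\<exists>x\<in>{lo..hi}. p x = x)"
proof -
  have g: "y \<in> {lo..hi} \<Longrightarrow> grw i y = y" for y using assms(3) by (simp add: grw_def)
  show ?thesis using rem_fix_iff[OF assms(1,2)] g by auto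
qed

definition Dec :: "nat \<Rightarrow> nat \<Rightarrow> nat \<Rightarrow> nat \<Rightarrow> (nat \<Rightarrow> nat) \<Rightarrow> bool" where
  "Dec l1 l2 l3 l4 p \<longleftrightarrow> dec_on p 1 l1 \<and> dec_on p (l1+1) (l1+l2) \<and> dec_on p (l1+l2+1) (l1+l2+l3)
     \<and> dec_on p (l1+l2+l3+1) (l1+l2+l3+l4)"

definition S :: "nat \<Rightarrow> nat \<Rightarrow> nat \<Rightarrow> nat \<Rightarrow> bool \<Rightarrow> bool \<Rightarrow> (nat \<Rightarrow> nat) set" where
  "S l1 l2 l3 l4 b1 b2 = {p. p permutes {1..l1+l2+l3+l4} \<and> Dec l1 l2 l3 l4 p
     \<and> (\<exists>i\<in>{1..l1}. p i = i) = b1 \<and> (\<exists>i\<in>{l1+1..l1+l2}. p i = i) = b2}"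

definition All :: "nat \<Rightarrow> nat \<Rightarrow> nat \<Rightarrow> nat \<Rightarrow> (nat \<Rightarrow> nat) set" where
  "All l1 l2 l3 l4 = {p. p permutes {1..l1+l2+l3+l4} \<and> Dec l1 l2 l3 l4 p}"

lemma Ncount_S: "Ncount l1 l2 l3 l4 = card (S l1 l2 l3 l4 False False)"
proof -
  have "(\<forall>i\<in>{1..l1+l2}. p i \<noteq> i) \<longleftrightarrow> \<not> (\<exists>i\<in>{1..l1}. p i = i) \<and> \<not> (\<exists>i\<in>{l1+1..l1+l2}. p i = i)"
    for p :: "nat \<Rightarrow> nat"
  proof -
    have "{1..l1+l2} = {1..l1} \<union> {l1+1..l1+l2}" by auto
    then show ?thesis by blast
  qed
  then show ?thesis unfolding Ncount_def S_def Dec_def by (intro arg_cong[where f=card]) blast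
qed

lemma R1:
  assumes "l1 = Suc L"
  shows "card (S l1 l2 l3 l4 True b) = card (S L l2 l3 l4 False b)"
proof -
  define n where "n = l1 + l2 + l3 + l4"
  define D where "D p \<longleftrightarrow> dec_on p (l1+1) (l1+l2) \<and> dec_on p (l1+l2+1) (l1+l2+l3)
     \<and> dec_on p (l1+l2+l3+1) (l1+l2+l3+l4) \<and> (\<exists>i\<in>{l1+1..l1+l2}. p i = i) = b" for p :: "nat \<Rightarrow> nat"
  define D' where "D' q \<longleftrightarrow> dec_on q (L+1) (L+l2) \<and> dec_on q (L+l2+1) (L+l2+l3)
     \<and> dec_on q (L+l2+l3+1) (L+l2+l3+l4) \<and> (\<exists>i\<in>{L+1..L+l2}. q i = i) = b" for q :: "nat \<Rightarrow> nat"
  have e1: "S l1 l2 l3 l4 True b = {p. p permutes {1..n} \<and> dec_on p 1 l1 \<and> (\<exists>i\<in>{1..l1}. p i = i) \<and> D p}"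
    unfolding S_def Dec_def D_def n_def by blast
  have e2: "S L l2 l3 l4 False b = {q. q permutes {1..n-1} \<and> dec_on q 1 (l1-1) \<and> (\<forall>i\<in>{1..l1-1}. q i \<noteq> i) \<and> D' q}"
  proof -
    have "n - 1 = L + l2 + l3 + l4" "l1 - 1 = L" using assms by (simp_all add: n_def)
    then show ?thesis unfolding S_def Dec_def D'_def by auto
  qed
  have DD': "D p \<longleftrightarrow> D' (rem i i p)"
    if p: "p permutes {1..n}" "1 \<le> i" "i \<le> l1" "p i = i" "dec_on p 1 l1" for p i
  proof -
    have ip: "inj p" using p(1) by (rule permutes_inj)
    have a: "i \<le> L + 1" "i \<le> L + l2 + 1" "i \<le> L + l2 + l3 + 1" using p assms by linarith+
    show ?thesis unfolding D_def D'_def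
      using dec_after'[OF ip p(4) a(1)] dec_after'[OF ip p(4) a(2)] dec_after'[OF ip p(4) a(3)]
        fp_after[OF ip p(4) a(1), of "L + l2"] assms by simp
  qed
  show ?thesis unfolding e1 e2
    by (rule card_fp_remove) (use assms DD' in \<open>auto simp: n_def\<close>)
qed

lemma R2:
  assumes "l2 = Suc M"
  shows "card (S l1 l2 l3 l4 b True) = card (S l1 M l3 l4 b False)"
proof -
  define n where "n = l1 + l2 + l3 + l4"
  define D where "D p \<longleftrightarrow> dec_on p 1 l1 \<and> dec_on p (l1+l2+1) (l1+l2+l3)
     \<and> dec_on p (l1+l2+l3+1) (l1+l2+l3+l4) \<and> (\<exists>i\<in>{1..l1}. p i = i) = b" for p :: "nat \<Rightarrow> nat"
  define D' where "D' q \<longleftrightarrow> dec_on q 1 l1 \<and> dec_on q (l1+M+1) (l1+M+l3)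
     \<and> dec_on q (l1+M+l3+1) (l1+M+l3+l4) \<and> (\<exists>i\<in>{1..l1}. q i = i) = b" for q :: "nat \<Rightarrow> nat"
  have e1: "S l1 l2 l3 l4 b True = {p. p permutes {1..n} \<and> dec_on p (l1+1) (l1+l2) \<and> (\<exists>i\<in>{l1+1..l1+l2}. p i = i) \<and> D p}"
    unfolding S_def Dec_def D_def n_def by blast
  have e2: "S l1 M l3 l4 b False = {q. q permutes {1..n-1} \<and> dec_on q (l1+1) (l1+l2-1) \<and> (\<forall>i\<in>{l1+1..l1+l2-1}. q i \<noteq> i) \<and> D' q}"
  proof -
    have "n - 1 = l1 + M + l3 + l4" "l1 + l2 - 1 = l1 + M" using assms by (simp_all add: n_def)
    then show ?thesis unfolding S_def Dec_def D'_def by auto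
  qed
  have DD': "D p \<longleftrightarrow> D' (rem i i p)"
    if p: "p permutes {1..n}" "l1 + 1 \<le> i" "i \<le> l1 + l2" "p i = i" "dec_on p (l1+1) (l1+l2)" for p i
  proof -
    have ip: "inj p" using p(1) by (rule permutes_inj)
    have a: "i \<le> l1 + M + 1" "i \<le> l1 + M + l3 + 1" "l1 < i" using p assms by linarith+
    show ?thesis unfolding D_def D'_def
      using dec_after'[OF ip p(4) a(1)] dec_after'[OF ip p(4) a(2)] dec_before[OF ip p(4) a(3)]
        fp_before[OF ip p(4) a(3), of 1] assms by simp
  qed
  show ?thesis unfolding e1 e2
    by (rule card_fp_remove) (use assms DD' in \<open>auto simp: n_def\<close>)
qed

lemma S_empty1: "S 0 l2 l3 l4 True b = {}" by (auto simp: S_def)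
lemma S_empty2: "S l1 0 l3 l4 b True = {}" by (auto simp: S_def)



lemma finite_perms_sub: "finite {p. p permutes {1..(n::nat)} \<and> P p}"
  by (rule finite_subset[OF _ finite_permutations[of "{1..n}"]]) auto

lemma All_split:
  "card (All l1 l2 l3 l4) = card (S l1 l2 l3 l4 False False) + card (S l1 l2 l3 l4 True False)
     + card (S l1 l2 l3 l4 False True) + card (S l1 l2 l3 l4 True True)"
proof -
  have fin: "finite (S l1 l2 l3 l4 b1 b2)" for b1 b2 unfolding S_def by (rule finite_perms_sub)
  have e: "All l1 l2 l3 l4 = ((S l1 l2 l3 l4 False False \<union> S l1 l2 l3 l4 True False)
     \<union> S l1 l2 l3 l4 False True) \<union> S l1 l2 l3 l4 True True"
    unfolding All_def S_def by auto
  have dm: "p \<in> S l1 l2 l3 l4 b1 b2 \<Longrightarrow> p \<in> S l1 l2 l3 l4 c1 c2 \<Longrightarrow> b1 = c1 \<and> b2 = c2"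
    for p b1 b2 c1 c2 unfolding S_def by auto
  let ?A = "S l1 l2 l3 l4 False False" and ?B = "S l1 l2 l3 l4 True False"
    and ?C = "S l1 l2 l3 l4 False True" and ?D = "S l1 l2 l3 l4 True True"
  have "card (?A \<union> ?B) = card ?A + card ?B"
    by (rule card_Un_disjoint) (use fin dm in blast)+
  moreover have "card ((?A \<union> ?B) \<union> ?C) = card (?A \<union> ?B) + card ?C"
    by (rule card_Un_disjoint) (use fin dm in blast)+
  moreover have "card (((?A \<union> ?B) \<union> ?C) \<union> ?D) = card ((?A \<union> ?B) \<union> ?C) + card ?D"
    by (rule card_Un_disjoint) (use fin dm in blast)+
  ultimately show ?thesis unfolding e by simp
qed

lemma All_N:
  "card (All l1 l2 l3 l4) = Ncount l1 l2 l3 l4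
    + (if 1 \<le> l1 then Ncount (l1-1) l2 l3 l4 else 0)
    + (if 1 \<le> l2 then Ncount l1 (l2-1) l3 l4 else 0)
    + (if 1 \<le> l1 \<and> 1 \<le> l2 then Ncount (l1-1) (l2-1) l3 l4 else 0)"
proof -
  have a: "card (S l1 l2 l3 l4 True False) = (if 1 \<le> l1 then Ncount (l1-1) l2 l3 l4 else 0)"
    by (cases l1) (simp_all add: S_empty1 R1 Ncount_S)
  have b: "card (S l1 l2 l3 l4 False True) = (if 1 \<le> l2 then Ncount l1 (l2-1) l3 l4 else 0)"
    by (cases l2) (simp_all add: S_empty2 R2 Ncount_S)
  have c: "card (S l1 l2 l3 l4 True True) = (if 1 \<le> l1 \<and> 1 \<le> l2 then Ncount (l1-1) (l2-1) l3 l4 else 0)"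
  proof (cases l1)
    case 0 then show ?thesis by (simp add: S_empty1)
  next
    case (Suc L)
    then have "card (S l1 l2 l3 l4 True True) = card (S L l2 l3 l4 False True)" by (simp add: R1)
    also have "\<dots> = (if 1 \<le> l2 then Ncount L (l2-1) l3 l4 else 0)"
      by (cases l2) (simp_all add: S_empty2 R2 Ncount_S)
    finally show ?thesis using Suc by simp
  qed
  show ?thesis using All_split[of l1 l2 l3 l4] a b c Ncount_S[of l1 l2 l3 l4] by simp
qed



lemma top_start:
  assumes p: "p permutes {1..n}" and d: "dec_on p lo hi" and "1 \<le> lo" "lo \<le> j" "j \<le> hi" "hi \<le> n" "p j = n"
  shows "j = lo"
proof (rule ccontr)
  assume "j \<noteq> lo"
  then have "lo \<le> j - 1" "j - 1 < j" using assms by linarith+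
  then have "p j < p (j - 1)" using d assms(5) unfolding dec_on_def by blast
  moreover have "j - 1 \<in> {1..n}" using assms \<open>lo \<le> j - 1\<close> by auto
  then have "p (j - 1) \<in> {1..n}" using permutes_in_image[OF p] by blast
  ultimately show False using assms(7) by auto
qed

lemma E1:
  assumes "l1 = Suc L"
  shows "card {p \<in> All l1 l2 l3 l4. p 1 = l1+l2+l3+l4} = card (All L l2 l3 l4)"
proof -
  define n where "n = l1 + l2 + l3 + l4"
  define D where "D p \<longleftrightarrow> dec_on p (l1+1) (l1+l2) \<and> dec_on p (l1+l2+1) (l1+l2+l3)
     \<and> dec_on p (l1+l2+l3+1) (l1+l2+l3+l4)" for p :: "nat \<Rightarrow> nat"
  define D' where "D' q \<longleftrightarrow> dec_on q (L+1) (L+l2) \<and> dec_on q (L+l2+1) (L+l2+l3)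
     \<and> dec_on q (L+l2+l3+1) (L+l2+l3+l4)" for q :: "nat \<Rightarrow> nat"
  have e1: "{p \<in> All l1 l2 l3 l4. p 1 = l1+l2+l3+l4} = {p. p permutes {1..n} \<and> dec_on p 1 l1 \<and> p 1 = n \<and> D p}"
    unfolding All_def Dec_def D_def n_def by blast
  have e2: "All L l2 l3 l4 = {q. q permutes {1..n-1} \<and> dec_on q 1 (l1-1) \<and> D' q}"
  proof -
    have "n - 1 = L + l2 + l3 + l4" "l1 - 1 = L" using assms by (simp_all add: n_def)
    then show ?thesis unfolding All_def Dec_def D'_def by auto
  qed
  have DD': "D p \<longleftrightarrow> D' (rem 1 n p)"
    if p: "p permutes {1..n}" "p 1 = n" for p
  proof -
    have ip: "inj p" using p(1) by (rule permutes_inj)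
    have a: "1 \<le> L + 1" "1 \<le> L + l2 + 1" "1 \<le> L + l2 + l3 + 1" by linarith+
    show ?thesis unfolding D_def D'_def
      using dec_after'[OF ip p(2) a(1)] dec_after'[OF ip p(2) a(2)] dec_after'[OF ip p(2) a(3)]
        assms by simp
  qed
  show ?thesis unfolding e1 e2
    by (rule card_top_remove) (use assms DD' in \<open>auto simp: n_def\<close>)
qed

lemma E2:
  assumes "l2 = Suc M"
  shows "card {p \<in> All l1 l2 l3 l4. p (l1+1) = l1+l2+l3+l4} = card (All l1 M l3 l4)"
proof -
  define n where "n = l1 + l2 + l3 + l4"
  define D where "D p \<longleftrightarrow> dec_on p 1 l1 \<and> dec_on p (l1+l2+1) (l1+l2+l3)
     \<and> dec_on p (l1+l2+l3+1) (l1+l2+l3+l4)" for p :: "nat \<Rightarrow> nat"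
  define D' where "D' q \<longleftrightarrow> dec_on q 1 l1 \<and> dec_on q (l1+M+1) (l1+M+l3)
     \<and> dec_on q (l1+M+l3+1) (l1+M+l3+l4)" for q :: "nat \<Rightarrow> nat"
  have e1: "{p \<in> All l1 l2 l3 l4. p (l1+1) = l1+l2+l3+l4} = {p. p permutes {1..n} \<and> dec_on p (l1+1) (l1+l2) \<and> p (l1+1) = n \<and> D p}"
    unfolding All_def Dec_def D_def n_def by blast
  have e2: "All l1 M l3 l4 = {q. q permutes {1..n-1} \<and> dec_on q (l1+1) (l1+l2-1) \<and> D' q}"
  proof -
    have "n - 1 = l1 + M + l3 + l4" "l1 + l2 - 1 = l1 + M" using assms by (simp_all add: n_def)
    then show ?thesis unfolding All_def Dec_def D'_def by auto
  qed
  have DD': "D p \<longleftrightarrow> D' (rem (l1+1) n p)"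
    if p: "p permutes {1..n}" "p (l1+1) = n" for p
  proof -
    have ip: "inj p" using p(1) by (rule permutes_inj)
    have a: "l1 + 1 \<le> l1 + M + 1" "l1 + 1 \<le> l1 + M + l3 + 1" "l1 < l1 + 1" by linarith+
    show ?thesis unfolding D_def D'_def
      using dec_after'[OF ip p(2) a(1)] dec_after'[OF ip p(2) a(2)] dec_before[OF ip p(2) a(3)]
        assms by simp
  qed
  show ?thesis unfolding e1 e2
    by (rule card_top_remove) (use assms DD' in \<open>auto simp: n_def\<close>)
qed

lemma E3:
  assumes "l3 = Suc K"
  shows "card {p \<in> All l1 l2 l3 l4. p (l1+l2+1) = l1+l2+l3+l4} = card (All l1 l2 K l4)"
proof -
  define n where "n = l1 + l2 + l3 + l4"
  define D where "D p \<longleftrightarrow> dec_on p 1 l1 \<and> dec_on p (l1+1) (l1+l2)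
     \<and> dec_on p (l1+l2+l3+1) (l1+l2+l3+l4)" for p :: "nat \<Rightarrow> nat"
  define D' where "D' q \<longleftrightarrow> dec_on q 1 l1 \<and> dec_on q (l1+1) (l1+l2)
     \<and> dec_on q (l1+l2+K+1) (l1+l2+K+l4)" for q :: "nat \<Rightarrow> nat"
  have e1: "{p \<in> All l1 l2 l3 l4. p (l1+l2+1) = l1+l2+l3+l4} = {p. p permutes {1..n} \<and> dec_on p (l1+l2+1) (l1+l2+l3) \<and> p (l1+l2+1) = n \<and> D p}"
    unfolding All_def Dec_def D_def n_def by blast
  have e2: "All l1 l2 K l4 = {q. q permutes {1..n-1} \<and> dec_on q (l1+l2+1) (l1+l2+l3-1) \<and> D' q}"
  proof -
    have "n - 1 = l1 + l2 + K + l4" "l1 + l2 + l3 - 1 = l1 + l2 + K" using assms by (simp_all add: n_def)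
    then show ?thesis unfolding All_def Dec_def D'_def by auto
  qed
  have DD': "D p \<longleftrightarrow> D' (rem (l1+l2+1) n p)"
    if p: "p permutes {1..n}" "p (l1+l2+1) = n" for p
  proof -
    have ip: "inj p" using p(1) by (rule permutes_inj)
    have a: "l1 + l2 + 1 \<le> l1 + l2 + K + 1" "l1 < l1 + l2 + 1" "l1 + l2 < l1 + l2 + 1" by linarith+
    show ?thesis unfolding D_def D'_def
      using dec_after'[OF ip p(2) a(1)] dec_before[OF ip p(2) a(2)] dec_before[OF ip p(2) a(3)]
        assms by simp
  qed
  show ?thesis unfolding e1 e2
    by (rule card_top_remove) (use assms DD' in \<open>auto simp: n_def\<close>)
qed

lemma E4:
  assumes "l4 = Suc R"
  shows "card {p \<in> All l1 l2 l3 l4. p (l1+l2+l3+1) = l1+l2+l3+l4} = card (All l1 l2 l3 R)"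
proof -
  define n where "n = l1 + l2 + l3 + l4"
  define D where "D p \<longleftrightarrow> dec_on p 1 l1 \<and> dec_on p (l1+1) (l1+l2)
     \<and> dec_on p (l1+l2+1) (l1+l2+l3)" for p :: "nat \<Rightarrow> nat"
  have e1: "{p \<in> All l1 l2 l3 l4. p (l1+l2+l3+1) = l1+l2+l3+l4} = {p. p permutes {1..n} \<and> dec_on p (l1+l2+l3+1) n \<and> p (l1+l2+l3+1) = n \<and> D p}"
    unfolding All_def Dec_def D_def n_def by blast
  have e2: "All l1 l2 l3 R = {q. q permutes {1..n-1} \<and> dec_on q (l1+l2+l3+1) (n-1) \<and> D q}"
  proof -
    have "n - 1 = l1 + l2 + l3 + R" using assms by (simp_all add: n_def)
    then show ?thesis unfolding All_def Dec_def D_def by auto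
  qed
  have DD': "D p \<longleftrightarrow> D (rem (l1+l2+l3+1) n p)"
    if p: "p permutes {1..n}" "p (l1+l2+l3+1) = n" for p
  proof -
    have ip: "inj p" using p(1) by (rule permutes_inj)
    have a: "l1 < l1 + l2 + l3 + 1" "l1 + l2 < l1 + l2 + l3 + 1" "l1 + l2 + l3 < l1 + l2 + l3 + 1" by linarith+
    show ?thesis unfolding D_def
      using dec_before[OF ip p(2) a(1)] dec_before[OF ip p(2) a(2)] dec_before[OF ip p(2) a(3)]
      by simp
  qed
  show ?thesis unfolding e1 e2
    by (rule card_top_remove) (use assms DD' in \<open>auto simp: n_def\<close>)
qed



lemma All_top:
  assumes "1 \<le> l1+l2+l3+l4"
  shows "card (All l1 l2 l3 l4) = (if 1 \<le> l1 then card (All (l1-1) l2 l3 l4) else 0)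
    + (if 1 \<le> l2 then card (All l1 (l2-1) l3 l4) else 0)
    + (if 1 \<le> l3 then card (All l1 l2 (l3-1) l4) else 0)
    + (if 1 \<le> l4 then card (All l1 l2 l3 (l4-1)) else 0)"
proof -
  define n where "n = l1+l2+l3+l4"
  define A where "A = All l1 l2 l3 l4"
  define E1 where "E1 = {p \<in> A. 1 \<le> l1 \<and> p 1 = n}"
  define E2 where "E2 = {p \<in> A. 1 \<le> l2 \<and> p (l1+1) = n}"
  define E3 where "E3 = {p \<in> A. 1 \<le> l3 \<and> p (l1+l2+1) = n}"
  define E4 where "E4 = {p \<in> A. 1 \<le> l4 \<and> p (l1+l2+l3+1) = n}"
  have fA: "finite A" unfolding A_def All_def by (rule finite_perms_sub)
  have f: "finite E1" "finite E2" "finite E3" "finite E4"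
    unfolding E1_def E2_def E3_def E4_def using fA by auto
  have c1: "card E1 = (if 1 \<le> l1 then card (All (l1-1) l2 l3 l4) else 0)"
  proof (cases l1)
    case (Suc L)
    then have "E1 = {p \<in> All l1 l2 l3 l4. p 1 = l1+l2+l3+l4}" unfolding E1_def A_def n_def by auto
    then show ?thesis using E1[OF Suc] Suc by simp
  qed (simp add: E1_def)
  have c2: "card E2 = (if 1 \<le> l2 then card (All l1 (l2-1) l3 l4) else 0)"
  proof (cases l2)
    case (Suc L)
    then have "E2 = {p \<in> All l1 l2 l3 l4. p (l1+1) = l1+l2+l3+l4}" unfolding E2_def A_def n_def by auto
    then show ?thesis using E2[OF Suc] Suc by simp
  qed (simp add: E2_def)
  have c3: "card E3 = (if 1 \<le> l3 then card (All l1 l2 (l3-1) l4) else 0)"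
  proof (cases l3)
    case (Suc L)
    then have "E3 = {p \<in> All l1 l2 l3 l4. p (l1+l2+1) = l1+l2+l3+l4}" unfolding E3_def A_def n_def by auto
    then show ?thesis using E3[OF Suc] Suc by simp
  qed (simp add: E3_def)
  have c4: "card E4 = (if 1 \<le> l4 then card (All l1 l2 l3 (l4-1)) else 0)"
  proof (cases l4)
    case (Suc L)
    then have "E4 = {p \<in> All l1 l2 l3 l4. p (l1+l2+l3+1) = l1+l2+l3+l4}" unfolding E4_def A_def n_def by auto
    then show ?thesis using E4[OF Suc] Suc by simp
  qed (simp add: E4_def)
  have cover: "A = ((E1 \<union> E2) \<union> E3) \<union> E4"
  proof
    show "((E1 \<union> E2) \<union> E3) \<union> E4 \<subseteq> A" unfolding E1_def E2_def E3_def E4_def by auto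
    show "A \<subseteq> ((E1 \<union> E2) \<union> E3) \<union> E4"
    proof
      fix p assume pA: "p \<in> A"
      then have p: "p permutes {1..n}" "Dec l1 l2 l3 l4 p" unfolding A_def All_def n_def by auto
      obtain j where j: "p j = n" using permutes_surj[OF p(1)] by (metis surjD)
      have "n \<in> {1..n}" using assms n_def by auto
      then have jr: "j \<in> {1..n}" using permutes_in_image[OF p(1), of j] j by simp
      have d: "dec_on p 1 l1" "dec_on p (l1+1) (l1+l2)" "dec_on p (l1+l2+1) (l1+l2+l3)"
        "dec_on p (l1+l2+l3+1) (l1+l2+l3+l4)" using p(2) unfolding Dec_def by auto
      consider "j \<le> l1" | "l1 < j" "j \<le> l1 + l2" | "l1 + l2 < j" "j \<le> l1+l2+l3" | "l1+l2+l3 < j"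
        by linarith
      then show "p \<in> ((E1 \<union> E2) \<union> E3) \<union> E4"
      proof cases
        case 1
        then have "j = 1" using top_start[OF p(1) d(1) _ _ _ _ j] jr n_def by auto
        then show ?thesis using pA j 1 jr unfolding E1_def by auto
      next
        case 2
        then have "j = l1 + 1" using top_start[OF p(1) d(2) _ _ _ _ j] jr n_def by auto
        then show ?thesis using pA j 2 unfolding E2_def by auto
      next
        case 3
        then have "j = l1 + l2 + 1" using top_start[OF p(1) d(3) _ _ _ _ j] jr n_def by auto
        then show ?thesis using pA j 3 unfolding E3_def by auto
      next
        case 4
        then have "j = l1 + l2 + l3 + 1" using top_start[OF p(1) d(4) _ _ _ _ j] jr n_def by auto
        then show ?thesis using pA j 4 jr n_def unfolding E4_def by auto
      qed
    qed
  qed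
  have injA: "p \<in> A \<Longrightarrow> p x = p y \<Longrightarrow> x = y" for p x y
    unfolding A_def All_def using permutes_inj by (metis (mono_tags, lifting) injD mem_Collect_eq)
  have x12: "p \<in> E1 \<Longrightarrow> p \<in> E2 \<Longrightarrow> False" for p
    using injA[of p 1 "l1+1"] unfolding E1_def E2_def by auto
  have x13: "p \<in> E1 \<Longrightarrow> p \<in> E3 \<Longrightarrow> False" for p
    using injA[of p 1 "l1+l2+1"] unfolding E1_def E3_def by auto
  have x14: "p \<in> E1 \<Longrightarrow> p \<in> E4 \<Longrightarrow> False" for p
    using injA[of p 1 "l1+l2+l3+1"] unfolding E1_def E4_def by auto
  have x23: "p \<in> E2 \<Longrightarrow> p \<in> E3 \<Longrightarrow> False" for p
    using injA[of p "l1+1" "l1+l2+1"] unfolding E2_def E3_def by auto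
  have x24: "p \<in> E2 \<Longrightarrow> p \<in> E4 \<Longrightarrow> False" for p
    using injA[of p "l1+1" "l1+l2+l3+1"] unfolding E2_def E4_def by auto
  have x34: "p \<in> E3 \<Longrightarrow> p \<in> E4 \<Longrightarrow> False" for p
    using injA[of p "l1+l2+1" "l1+l2+l3+1"] unfolding E3_def E4_def by auto
  have d12: "E1 \<inter> E2 = {}" using x12 by blast
  have d3: "(E1 \<union> E2) \<inter> E3 = {}" using x13 x23 by blast
  have d4: "((E1 \<union> E2) \<union> E3) \<inter> E4 = {}" using x14 x24 x34 by blast
  have "card A = card E1 + card E2 + card E3 + card E4"
    unfolding cover using f d12 d3 d4 by (simp add: card_Un_disjoint)
  then show ?thesis using c1 c2 c3 c4 unfolding A_def by simp
qed

lemma All_zero: "card (All 0 0 0 0) = 1"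
proof -
  have "All 0 0 0 0 = {id}" unfolding All_def Dec_def dec_on_def
    by (auto simp: permutes_empty)
  then show ?thesis by simp
qed

lemma All_fact:
  "card (All l1 l2 l3 l4) * fact l1 * fact l2 * fact l3 * fact l4 = fact (l1+l2+l3+l4)"
proof (induction "l1+l2+l3+l4" arbitrary: l1 l2 l3 l4)
  case 0
  then show ?case using All_zero by simp
next
  case (Suc n)
  define F where "F = (fact l1 * fact l2 * fact l3 * fact l4 :: nat)"
  have t1: "(if 1 \<le> l1 then card (All (l1-1) l2 l3 l4) else 0) * F = l1 * fact n"
  proof (cases l1)
    case (Suc L)
    then have "card (All L l2 l3 l4) * fact L * fact l2 * fact l3 * fact l4 = fact n"
      using Suc.hyps(1)[of L l2 l3 l4] Suc.hyps(2) by simp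
    then show ?thesis using Suc unfolding F_def by (simp add: algebra_simps)
  qed (simp add: F_def)
  have t2: "(if 1 \<le> l2 then card (All l1 (l2-1) l3 l4) else 0) * F = l2 * fact n"
  proof (cases l2)
    case (Suc L)
    then have "card (All l1 L l3 l4) * fact l1 * fact L * fact l3 * fact l4 = fact n"
      using Suc.hyps(1)[of l1 L l3 l4] Suc.hyps(2) by simp
    then show ?thesis using Suc unfolding F_def by (simp add: algebra_simps)
  qed (simp add: F_def)
  have t3: "(if 1 \<le> l3 then card (All l1 l2 (l3-1) l4) else 0) * F = l3 * fact n"
  proof (cases l3)
    case (Suc L)
    then have "card (All l1 l2 L l4) * fact l1 * fact l2 * fact L * fact l4 = fact n"
      using Suc.hyps(1)[of l1 l2 L l4] Suc.hyps(2) by simp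
    then show ?thesis using Suc unfolding F_def by (simp add: algebra_simps)
  qed (simp add: F_def)
  have t4: "(if 1 \<le> l4 then card (All l1 l2 l3 (l4-1)) else 0) * F = l4 * fact n"
  proof (cases l4)
    case (Suc L)
    then have "card (All l1 l2 l3 L) * fact l1 * fact l2 * fact l3 * fact L = fact n"
      using Suc.hyps(1)[of l1 l2 l3 L] Suc.hyps(2) by simp
    then show ?thesis using Suc unfolding F_def by (simp add: algebra_simps)
  qed (simp add: F_def)
  have "card (All l1 l2 l3 l4) * F = (l1 + l2 + l3 + l4) * fact n"
    using All_top[of l1 l2 l3 l4] Suc.hyps(2) t1 t2 t3 t4 by (simp add: algebra_simps)
  also have "\<dots> = fact (Suc n)" using Suc.hyps(2)[symmetric] by (simp only: fact_Suc of_nat_id)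
  finally show ?case unfolding F_def using Suc.hyps(2) by (simp add: algebra_simps)
qed



lemma All_binom:
  "card (All l1 l2 l3 l4) = ((l1+l2+l3+l4) choose (l3+l4)) * ((l3+l4) choose l3) * ((l1+l2) choose l1)"
proof -
  define F where "F = (fact l1 * fact l2 * fact l3 * fact l4 :: nat)"
  have Fp: "F > 0" unfolding F_def by simp
  have a: "fact l3 * fact l4 * ((l3+l4) choose l3) = (fact (l3+l4) :: nat)"
    using binomial_fact_lemma[of l3 "l3+l4"] by simp
  have b: "fact l1 * fact l2 * ((l1+l2) choose l1) = (fact (l1+l2) :: nat)"
    using binomial_fact_lemma[of l1 "l1+l2"] by simp
  have c: "fact (l3+l4) * fact (l1+l2) * ((l1+l2+l3+l4) choose (l3+l4)) = (fact (l1+l2+l3+l4) :: nat)"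
    using binomial_fact_lemma[of "l3+l4" "l1+l2+l3+l4"] by (simp add: algebra_simps)
  have "((l1+l2+l3+l4) choose (l3+l4)) * ((l3+l4) choose l3) * ((l1+l2) choose l1) * F
      = fact (l1+l2+l3+l4)"
    unfolding F_def c[symmetric] a[symmetric] b[symmetric] by (simp only: ac_simps)
  moreover have "card (All l1 l2 l3 l4) * F = fact (l1+l2+l3+l4)"
    using All_fact[of l1 l2 l3 l4] unfolding F_def by (simp add: algebra_simps)
  ultimately show ?thesis using Fp by (metis mult_right_cancel not_gr0)
qed

definition Mset :: "int \<Rightarrow> int \<Rightarrow> int \<Rightarrow> int set" where
  "Mset a1 a2 s = {m::int. a1 - m \<ge> 0 \<and> a2 - (s - m) \<ge> 0 \<and> m \<ge> 0 \<and> s - m \<ge> 0}"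

definition TT :: "int \<Rightarrow> int \<Rightarrow> int \<Rightarrow> nat" where
  "TT a1 a2 s = (\<Sum>m\<in>Mset a1 a2 s. card (All (nat (a1 - m)) (nat (a2 - (s - m))) (nat m) (nat (s - m))))"

lemma T_binom:
  "TT (int X) (int Y) (int Z) = ((X+Y) choose Z) * ((X+Y) choose X)"
proof -
  define N where "N = X + Y"
  define K where "K = {k::nat. k \<le> X \<and> k \<le> Z \<and> Z \<le> Y + k}"
  have MK: "Mset (int X) (int Y) (int Z) = int ` K"
  proof
    show "int ` K \<subseteq> Mset (int X) (int Y) (int Z)" unfolding K_def Mset_def by auto
    show "Mset (int X) (int Y) (int Z) \<subseteq> int ` K"
    proof
      fix m assume "m \<in> Mset (int X) (int Y) (int Z)"
      then have m: "int X - m \<ge> 0" "int Y - (int Z - m) \<ge> 0" "m \<ge> 0" "int Z - m \<ge> 0"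
        unfolding Mset_def by auto
      then obtain k where k: "m = int k" using nonneg_int_cases by blast
      then have "k \<in> K" using m unfolding K_def by auto
      then show "m \<in> int ` K" using k by blast
    qed
  qed
  have tm: "card (All (nat (int X - int k)) (nat (int Y - (int Z - int k))) (nat (int k)) (nat (int Z - int k)))
      = (N choose Z) * ((Z choose k) * ((N - Z) choose (X - k)))" if "k \<in> K" for k
  proof -
    have e: "nat (int X - int k) = X - k" "nat (int Y - (int Z - int k)) = Y + k - Z" "nat (int k) = k"
      "nat (int Z - int k) = Z - k" using that unfolding K_def by auto
    have f: "(X - k) + (Y + k - Z) + k + (Z - k) = N" "k + (Z - k) = Z" "(X - k) + (Y + k - Z) = N - Z"
      using that unfolding K_def N_def by auto
    show ?thesis unfolding e All_binom by (simp only: f(1), simp only: f(2) f(3))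
  qed
  have "TT (int X) (int Y) (int Z) = (\<Sum>k\<in>K. (N choose Z) * ((Z choose k) * ((N - Z) choose (X - k))))"
    unfolding TT_def by (rule sum.reindex_cong[OF _ MK]) (use tm in auto)
  also have "\<dots> = (N choose Z) * (\<Sum>k\<in>K. (Z choose k) * ((N - Z) choose (X - k)))"
    by (simp add: sum_distrib_left)
  also have "\<dots> = (N choose Z) * (N choose X)"
  proof (cases "Z \<le> N")
    case True
    have "(\<Sum>k\<in>K. (Z choose k) * ((N - Z) choose (X - k))) = (\<Sum>k\<le>X. (Z choose k) * ((N - Z) choose (X - k)))"
    proof (rule sum.mono_neutral_left)
      show "finite {..X}" by simp
      show "K \<subseteq> {..X}" unfolding K_def by auto
      show "\<forall>i\<in>{..X} - K. (Z choose i) * ((N - Z) choose (X - i)) = 0"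
      proof
        fix i assume i: "i \<in> {..X} - K"
        then have "Z < i \<or> Y + i < Z" unfolding K_def by auto
        then show "(Z choose i) * ((N - Z) choose (X - i)) = 0"
        proof
          assume "Y + i < Z"
          then have "N - Z < X - i" using i True unfolding N_def by auto
          then show ?thesis by simp
        qed simp
      qed
    qed
    also have "\<dots> = (Z + (N - Z)) choose X" by (rule vandermonde)
    finally show ?thesis using True by simp
  next
    case False
    then have "K = {}" unfolding K_def N_def by auto
    then show ?thesis using False by simp
  qed
  finally show ?thesis unfolding N_def .
qed



lemma finite_Mset: "finite (Mset a1 a2 s)"
  by (rule finite_subset[of _ "{0..s}"]) (auto simp: Mset_def)

lemma G_Mset: "G a1 a2 s = (\<Sum>m\<in>Mset a1 a2 s. Ncount (nat (a1 - m)) (nat (a2 - (s - m))) (nat m) (nat (s - m)))"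
  unfolding G_def Mset_def ..

lemma sum_if_Mset:
  assumes "{m \<in> Mset a1 a2 s. P m} = B" "\<And>m. m \<in> B \<Longrightarrow> f m = h m"
  shows "(\<Sum>m\<in>Mset a1 a2 s. if P m then f m else (0::nat)) = sum h B"
proof -
  have "(\<Sum>m\<in>Mset a1 a2 s. if P m then f m else (0::nat)) = sum f {m \<in> Mset a1 a2 s. P m}"
    by (simp add: sum.inter_filter[OF finite_Mset])
  then show ?thesis using assms by simp
qed

lemma TT_rec:
  "TT x y s = G x y s + G (x-1) y s + G x (y-1) s + G (x-1) (y-1) s"
proof -
  let ?l1 = "\<lambda>m. nat (x - m)" and ?l2 = "\<lambda>m. nat (y - (s - m))" and ?l3 = "\<lambda>m. nat m"
    and ?l4 = "\<lambda>m. nat (s - m)"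
  have "TT x y s = (\<Sum>m\<in>Mset x y s. Ncount (?l1 m) (?l2 m) (?l3 m) (?l4 m)
    + (if 1 \<le> ?l1 m then Ncount (?l1 m - 1) (?l2 m) (?l3 m) (?l4 m) else 0)
    + (if 1 \<le> ?l2 m then Ncount (?l1 m) (?l2 m - 1) (?l3 m) (?l4 m) else 0)
    + (if 1 \<le> ?l1 m \<and> 1 \<le> ?l2 m then Ncount (?l1 m - 1) (?l2 m - 1) (?l3 m) (?l4 m) else 0))"
    unfolding TT_def by (rule sum.cong[OF refl]) (rule All_N)
  also have "\<dots> = G x y s
    + (\<Sum>m\<in>Mset x y s. if 1 \<le> ?l1 m then Ncount (?l1 m - 1) (?l2 m) (?l3 m) (?l4 m) else 0)
    + (\<Sum>m\<in>Mset x y s. if 1 \<le> ?l2 m then Ncount (?l1 m) (?l2 m - 1) (?l3 m) (?l4 m) else 0)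
    + (\<Sum>m\<in>Mset x y s. if 1 \<le> ?l1 m \<and> 1 \<le> ?l2 m then Ncount (?l1 m - 1) (?l2 m - 1) (?l3 m) (?l4 m) else 0)"
    unfolding G_Mset by (simp add: sum.distrib)
  also have "(\<Sum>m\<in>Mset x y s. if 1 \<le> ?l1 m then Ncount (?l1 m - 1) (?l2 m) (?l3 m) (?l4 m) else 0) = G (x-1) y s"
    unfolding G_Mset by (rule sum_if_Mset) (auto simp: Mset_def nat_diff_distrib')
  also have "(\<Sum>m\<in>Mset x y s. if 1 \<le> ?l2 m then Ncount (?l1 m) (?l2 m - 1) (?l3 m) (?l4 m) else 0) = G x (y-1) s"
    unfolding G_Mset by (rule sum_if_Mset) (auto simp: Mset_def nat_diff_distrib')
  also have "(\<Sum>m\<in>Mset x y s. if 1 \<le> ?l1 m \<and> 1 \<le> ?l2 m then Ncount (?l1 m - 1) (?l2 m - 1) (?l3 m) (?l4 m) else 0) = G (x-1) (y-1) s"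
    unfolding G_Mset by (rule sum_if_Mset) (auto simp: Mset_def nat_diff_distrib')
  finally show ?thesis .
qed

lemma G_neg1: "G (-1) y s = 0" unfolding G_def by (rule sum.neutral) auto
lemma G_neg2: "G x (-1) s = 0" unfolding G_def by (rule sum.neutral) auto

lemma binom_nat: "binom (int N) (int K) = int (N choose K)"
  unfolding binom_def by (auto simp: binomial_eq_0)

lemma sum_int_nat: "(\<Sum>b\<in>{0..int A}. h b) = (\<Sum>k\<le>A. h (int k))"
proof -
  have "{0..int A} = int ` {..A}"
    by (auto simp: image_iff) (metis atMost_iff nonneg_int_cases nat_int of_nat_le_iff)
  then show ?thesis by (simp add: sum.reindex)
qed

lemma tele:
  fixes f :: "int \<Rightarrow> int"
  assumes "0 \<le> a" "f (-1) = 0"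
  shows "(\<Sum>b\<in>{0..a}. (-1) ^ nat b * (f (a - b) + f (a - b - 1))) = f a"
proof -
  obtain A where a: "a = int A" using assms(1) nonneg_int_cases by blast
  have "(\<Sum>k\<le>A. (-1) ^ k * (f (int A - int k) + f (int A - int k - 1))) = f (int A)"
  proof (induction A)
    case 0 then show ?case using assms(2) by simp
  next
    case (Suc A)
    define h where "h k = (-1::int) ^ k * (f (int (Suc A) - int k) + f (int (Suc A) - int k - 1))" for k
    have "(\<Sum>k\<le>Suc A. h k) = h 0 + (\<Sum>k\<le>A. h (Suc k))" by (rule sum.atMost_Suc_shift)
    moreover have "h 0 = f (1 + int A) + f (int A)" unfolding h_def by simp
    moreover have "h (Suc k) = - ((-1) ^ k * (f (int A - int k) + f (int A - int k - 1)))" for k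
      unfolding h_def by (simp add: algebra_simps)
    ultimately have "(\<Sum>k\<le>Suc A. h k) = f (1 + int A) + f (int A) - (\<Sum>k\<le>A. (-1) ^ k * (f (int A - int k) + f (int A - int k - 1)))"
      by (simp add: sum_negf)
    then show ?case using Suc.IH unfolding h_def by simp
  qed
  then show ?thesis unfolding a sum_int_nat by simp
qed



theorem mainTheorem12:
  fixes a1 a2 s :: int
  assumes "a1 \<ge> 0" and "a2 \<ge> 0" and "s \<ge> 0"
  shows "int (G a1 a2 s) =
    (\<Sum>b1\<in>{0..a1}. \<Sum>b2\<in>{0..a2}.
        (-1) ^ nat (b1 + b2) * binom (a1 + a2 - b1 - b2) s * binom (a1 + a2 - b1 - b2) (a1 - b1))"
proof -
  define g where "g x y = int (G x y s)" for x y
  have g1: "g (-1) y = 0" for y unfolding g_def by (simp add: G_neg1)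
  have g2: "g x (-1) = 0" for x unfolding g_def by (simp add: G_neg2)
  have T: "binom (x + y) s * binom (x + y) x = g x y + g (x-1) y + g x (y-1) + g (x-1) (y-1)"
    if "0 \<le> x" "0 \<le> y" for x y
  proof -
    define X where "X = nat x"
    define Y where "Y = nat y"
    define Z where "Z = nat s"
    have x: "x = int X" using that(1) unfolding X_def by simp
    have y: "y = int Y" using that(2) unfolding Y_def by simp
    have z: "s = int Z" using assms(3) unfolding Z_def by simp
    note xyz = x y z
    have "binom (x + y) s * binom (x + y) x = int (TT x y s)"
      unfolding xyz T_binom of_nat_add[symmetric] binom_nat by simp
    then show ?thesis unfolding g_def TT_rec by simp
  qed
  have "(\<Sum>b1\<in>{0..a1}. \<Sum>b2\<in>{0..a2}.
        (-1) ^ nat (b1 + b2) * binom (a1 + a2 - b1 - b2) s * binom (a1 + a2 - b1 - b2) (a1 - b1))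
      = (\<Sum>b1\<in>{0..a1}. (-1) ^ nat b1 * (\<Sum>b2\<in>{0..a2}. (-1) ^ nat b2 *
          ((g (a1 - b1) (a2 - b2) + g (a1 - b1 - 1) (a2 - b2)) + (g (a1 - b1) (a2 - b2 - 1) + g (a1 - b1 - 1) (a2 - b2 - 1)))))"
  proof (rule sum.cong[OF refl])
    fix b1 assume b1: "b1 \<in> {0..a1}"
    show "(\<Sum>b2\<in>{0..a2}. (-1) ^ nat (b1 + b2) * binom (a1 + a2 - b1 - b2) s * binom (a1 + a2 - b1 - b2) (a1 - b1))
      = (-1) ^ nat b1 * (\<Sum>b2\<in>{0..a2}. (-1) ^ nat b2 *
          ((g (a1 - b1) (a2 - b2) + g (a1 - b1 - 1) (a2 - b2)) + (g (a1 - b1) (a2 - b2 - 1) + g (a1 - b1 - 1) (a2 - b2 - 1))))"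
      unfolding sum_distrib_left
    proof (rule sum.cong[OF refl])
      fix b2 assume b2: "b2 \<in> {0..a2}"
      have e: "a1 + a2 - b1 - b2 = (a1 - b1) + (a2 - b2)" by simp
      have n: "nat (b1 + b2) = nat b1 + nat b2" using b1 b2 by (simp add: nat_add_distrib)
      show "(-1) ^ nat (b1 + b2) * binom (a1 + a2 - b1 - b2) s * binom (a1 + a2 - b1 - b2) (a1 - b1)
        = (-1) ^ nat b1 * ((-1) ^ nat b2 *
          ((g (a1 - b1) (a2 - b2) + g (a1 - b1 - 1) (a2 - b2)) + (g (a1 - b1) (a2 - b2 - 1) + g (a1 - b1 - 1) (a2 - b2 - 1))))"
      proof -
        have t: "binom ((a1 - b1) + (a2 - b2)) s * binom ((a1 - b1) + (a2 - b2)) (a1 - b1)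
          = g (a1 - b1) (a2 - b2) + g (a1 - b1 - 1) (a2 - b2) + g (a1 - b1) (a2 - b2 - 1) + g (a1 - b1 - 1) (a2 - b2 - 1)"
          using T[of "a1 - b1" "a2 - b2"] b1 b2 by simp
        show ?thesis unfolding e n power_add mult.assoc t by (simp only: add.assoc)
      qed
    qed
  qed
  also have "\<dots> = (\<Sum>b1\<in>{0..a1}. (-1) ^ nat b1 * (g (a1 - b1) a2 + g (a1 - b1 - 1) a2))"
  proof (rule sum.cong[OF refl])
    fix b1 assume b1: "b1 \<in> {0..a1}"
    have "(\<Sum>b2\<in>{0..a2}. (-1) ^ nat b2 *
          ((\<lambda>y. g (a1 - b1) y + g (a1 - b1 - 1) y) (a2 - b2) + (\<lambda>y. g (a1 - b1) y + g (a1 - b1 - 1) y) (a2 - b2 - 1)))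
        = (\<lambda>y. g (a1 - b1) y + g (a1 - b1 - 1) y) a2"
      using tele[of a2 "\<lambda>y. g (a1 - b1) y + g (a1 - b1 - 1) y"] assms(2) g2 by simp
    then show "(-1) ^ nat b1 * (\<Sum>b2\<in>{0..a2}. (-1) ^ nat b2 *
          ((g (a1 - b1) (a2 - b2) + g (a1 - b1 - 1) (a2 - b2)) + (g (a1 - b1) (a2 - b2 - 1) + g (a1 - b1 - 1) (a2 - b2 - 1))))
      = (-1) ^ nat b1 * (g (a1 - b1) a2 + g (a1 - b1 - 1) a2)" by simp
  qed
  also have "\<dots> = g a1 a2"
    using tele[of a1 "\<lambda>x. g x a2"] assms(1) g1 by simp
  finally show ?thesis unfolding g_def by (rule sym)
qed


end
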